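(* Let $M$ be a strong module of a CPT poset $\mathbf{P}=(X,P)$, and let $\{W_x\}_{x\in X}$ be a CPT representation of $\mathbf{P}$ on a host tree $T$ in which some element $z\in M$ is represented by a trivial path $W_z=\{a\}$, $a$ a vertex of $T$. If $x\in X\setminus M$ and $W_x$ contains the vertex $a$, then $W_x$ contains $W_m$ for every $m\in M$.
   Context: A CPT representation of a poset $\mathbf{P}=(X,P)$ assigns to each $x\in X$ a path $W_x$ (vertex set) of a host tree $T$ so that $x<y$ iff $W_x\subsetneq W_y$. A set $M\subseteq X$ is a module if every $y\notin M$ is comparable to all elements of $M$ or incomparable to all of them; it is strong if for every module $M'$, $M\cap M'=\emptyset$ or $M\subseteq M'$ or $M'\subseteq M$. A trivial path consists of a single vertex. *)

theory Defs
  imports Main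
begin

definition simple_graph :: "'v set \<Rightarrow> ('v \<Rightarrow> 'v \<Rightarrow> bool) \<Rightarrow> bool" where
  "simple_graph V E \<longleftrightarrow> finite V \<and> (\<forall>u v. E u v \<longrightarrow> u \<in> V \<and> v \<in> V)
     \<and> (\<forall>u v. E u v \<longrightarrow> E v u) \<and> (\<forall>u. \<not> E u u)"

definition is_walk :: "'v set \<Rightarrow> ('v \<Rightarrow> 'v \<Rightarrow> bool) \<Rightarrow> 'v list \<Rightarrow> bool" where
  "is_walk V E ps \<longleftrightarrow> ps \<noteq> [] \<and> set ps \<subseteq> V \<and> (\<forall>i. Suc i < length ps \<longrightarrow> E (ps ! i) (ps ! Suc i))"

definition is_path :: "'v set \<Rightarrow> ('v \<Rightarrow> 'v \<Rightarrow> bool) \<Rightarrow> 'v list \<Rightarrow> bool" where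
  "is_path V E ps \<longleftrightarrow> is_walk V E ps \<and> distinct ps"

definition is_cycle :: "'v set \<Rightarrow> ('v \<Rightarrow> 'v \<Rightarrow> bool) \<Rightarrow> 'v list \<Rightarrow> bool" where
  "is_cycle V E ps \<longleftrightarrow> is_path V E ps \<and> length ps \<ge> 3 \<and> E (last ps) (hd ps)"

definition connected_graph :: "'v set \<Rightarrow> ('v \<Rightarrow> 'v \<Rightarrow> bool) \<Rightarrow> bool" where
  "connected_graph V E \<longleftrightarrow> (\<forall>u\<in>V. \<forall>v\<in>V. \<exists>ps. is_walk V E ps \<and> hd ps = u \<and> last ps = v)"

definition is_tree :: "'v set \<Rightarrow> ('v \<Rightarrow> 'v \<Rightarrow> bool) \<Rightarrow> bool" where
  "is_tree V E \<longleftrightarrow> simple_graph V E \<and> V \<noteq> {} \<and> connected_graph V E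
     \<and> (\<nexists>ps. is_cycle V E ps)"

definition path_vertex_set :: "'v set \<Rightarrow> ('v \<Rightarrow> 'v \<Rightarrow> bool) \<Rightarrow> 'v set \<Rightarrow> bool" where
  "path_vertex_set V E W \<longleftrightarrow> (\<exists>ps. is_path V E ps \<and> set ps = W)"

definition strict_poset :: "'a set \<Rightarrow> ('a \<Rightarrow> 'a \<Rightarrow> bool) \<Rightarrow> bool" where
  "strict_poset X lt \<longleftrightarrow> finite X
     \<and> (\<forall>x\<in>X. \<not> lt x x)
     \<and> (\<forall>x\<in>X. \<forall>y\<in>X. \<forall>z\<in>X. lt x y \<longrightarrow> lt y z \<longrightarrow> lt x z)"

definition cpt_rep :: "'a set \<Rightarrow> ('a \<Rightarrow> 'a \<Rightarrow> bool) \<Rightarrow> 'v set \<Rightarrow> ('v \<Rightarrow> 'v \<Rightarrow> bool)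
    \<Rightarrow> ('a \<Rightarrow> 'v set) \<Rightarrow> bool" where
  "cpt_rep X lt V E W \<longleftrightarrow> is_tree V E
     \<and> (\<forall>x\<in>X. path_vertex_set V E (W x))
     \<and> (\<forall>x\<in>X. \<forall>y\<in>X. lt x y \<longleftrightarrow> W x \<subset> W y)"

definition comparable :: "('a \<Rightarrow> 'a \<Rightarrow> bool) \<Rightarrow> 'a \<Rightarrow> 'a \<Rightarrow> bool" where
  "comparable lt x y \<longleftrightarrow> lt x y \<or> lt y x"

definition is_module :: "'a set \<Rightarrow> ('a \<Rightarrow> 'a \<Rightarrow> bool) \<Rightarrow> 'a set \<Rightarrow> bool" where
  "is_module X lt M \<longleftrightarrow> M \<subseteq> X \<and>
     (\<forall>y\<in>X - M. (\<forall>m\<in>M. comparable lt y m) \<or> (\<forall>m\<in>M. \<not> comparable lt y m))"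

definition strong_module :: "'a set \<Rightarrow> ('a \<Rightarrow> 'a \<Rightarrow> bool) \<Rightarrow> 'a set \<Rightarrow> bool" where
  "strong_module X lt M \<longleftrightarrow> is_module X lt M \<and>
     (\<forall>M'. is_module X lt M' \<longrightarrow> M \<inter> M' = {} \<or> M \<subseteq> M' \<or> M' \<subseteq> M)"

end

theory Submission
  imports Defs
begin

theorem mainTheorem4:
  fixes X :: "'a set" and lt :: "'a \<Rightarrow> 'a \<Rightarrow> bool"
    and V :: "'v set" and E :: "'v \<Rightarrow> 'v \<Rightarrow> bool" and W :: "'a \<Rightarrow> 'v set"
  assumes "strict_poset X lt"
    and "cpt_rep X lt V E W"
    and "strong_module X lt M"
    and "z \<in> M" and "a \<in> V" and "W z = {a}"
    and "x \<in> X - M" and "a \<in> W x"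
  shows "\<forall>m\<in>M. W m \<subseteq> W x"
proof -
  have irr: "\<And>v. v \<in> X \<Longrightarrow> \<not> lt v v" using assms(1) unfolding strict_poset_def by blast
  have tr: "\<And>u v w. u \<in> X \<Longrightarrow> v \<in> X \<Longrightarrow> w \<in> X \<Longrightarrow> lt u v \<Longrightarrow> lt v w \<Longrightarrow> lt u w"
    using assms(1) unfolding strict_poset_def by blast
  have rep: "\<And>u v. u \<in> X \<Longrightarrow> v \<in> X \<Longrightarrow> lt u v \<longleftrightarrow> W u \<subset> W v"
    using assms(2) unfolding cpt_rep_def by blast
  have modM: "is_module X lt M" and strong: "\<And>M'. is_module X lt M' \<Longrightarrow> M \<inter> M' = {} \<or> M \<subseteq> M' \<or> M' \<subseteq> M"
    using assms(3) unfolding strong_module_def by blast+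
  have MX: "M \<subseteq> X" using modM unfolding is_module_def by blast
  have zX: "z \<in> X" using MX assms(4) by blast
  have xX: "x \<in> X" and xM: "x \<notin> M" using assms(7) by auto
  have unif: "\<And>y. y \<in> X - M \<Longrightarrow> (\<forall>m\<in>M. comparable lt y m) \<or> (\<forall>m\<in>M. \<not> comparable lt y m)"
    using modM unfolding is_module_def by blast
  show ?thesis
  proof (cases "W x = {a}")
    case True
    have "is_module X lt {x, z}"
      unfolding is_module_def
    proof (intro conjI ballI)
      show "{x, z} \<subseteq> X" using xX zX by blast
    next
      fix y assume y: "y \<in> X - {x, z}"
      have "comparable lt y x \<longleftrightarrow> comparable lt y z"
        unfolding comparable_def using rep[of y x] rep[of x y] rep[of y z] rep[of z y] y xX zX True assms(6)
        by auto
      then show "(\<forall>m\<in>{x, z}. comparable lt y m) \<or> (\<forall>m\<in>{x, z}. \<not> comparable lt y m)" by auto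
    qed
    from strong[OF this] have "M \<subseteq> {z}" using assms(4) xM by blast
    then show ?thesis using True assms(6) by auto
  next
    case False
    have "W z \<subset> W x" using False assms(6,8) by auto
    hence zx: "lt z x" using rep zX xX by blast
    have cxM: "\<forall>m\<in>M. comparable lt x m"
      using unif[of x] xX xM assms(4) zx unfolding comparable_def by blast
    show ?thesis
    proof
      fix m assume mM: "m \<in> M"
      have mX: "m \<in> X" using mM MX by blast
      have "lt m x \<or> lt x m" using cxM mM unfolding comparable_def by blast
      moreover have "\<not> lt x m"
      proof
        assume xm: "lt x m"
        define C where "C = {v \<in> X. (v \<in> M \<and> lt v x) \<or> (v \<notin> M \<and> (\<forall>d\<in>M. lt d x \<longrightarrow> lt d v) \<and> (\<forall>u\<in>M. lt x u \<longrightarrow> lt v u))}"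
        have xC: "x \<in> C" unfolding C_def using xX xM by auto
        have zC: "z \<in> C" unfolding C_def using zX assms(4) zx by auto
        have mC: "m \<notin> C"
        proof
          assume "m \<in> C"
          then have "lt m x" unfolding C_def using mM by auto
          then show False using tr[OF mX xX mX] xm irr mX by blast
        qed
        have "is_module X lt C"
          unfolding is_module_def
        proof (intro conjI ballI)
          show "C \<subseteq> X" unfolding C_def by blast
        next
          fix y assume y: "y \<in> X - C"
          hence yX: "y \<in> X" by blast
          show "(\<forall>v\<in>C. comparable lt y v) \<or> (\<forall>v\<in>C. \<not> comparable lt y v)"
          proof (cases "y \<in> M")
            case True
            have "\<not> lt y x" using y True unfolding C_def by blast
            hence xy: "lt x y" using cxM True unfolding comparable_def by blast
            have "\<forall>v\<in>C. comparable lt y v"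
            proof
              fix v assume v: "v \<in> C"
              hence vX: "v \<in> X" unfolding C_def by blast
              have "lt v y"
                using v xy True tr[OF vX xX yX] unfolding C_def by blast
              then show "comparable lt y v" unfolding comparable_def by blast
            qed
            then show ?thesis by blast
          next
            case yM: False
            from unif[of y] yX yM
            have "(\<forall>m\<in>M. comparable lt y m) \<or> (\<forall>m\<in>M. \<not> comparable lt y m)" by blast
            then show ?thesis
            proof
              assume all: "\<forall>m\<in>M. comparable lt y m"
              have "\<forall>v\<in>C. comparable lt y v"
              proof
                fix v assume v: "v \<in> C"
                hence vX: "v \<in> X" unfolding C_def by blast
                show "comparable lt y v"
                proof (cases "v \<in> M")
                  case True then show ?thesis using all by blast
                next
                  case vM: False
                  have vD: "\<forall>d\<in>M. lt d x \<longrightarrow> lt d v" and vU: "\<forall>u\<in>M. lt x u \<longrightarrow> lt v u"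
                    using v vM unfolding C_def by auto
                  show ?thesis
                  proof (cases "\<exists>d\<in>M. lt d x \<and> lt y d")
                    case True
                    then obtain d where d: "d \<in> M" "lt d x" "lt y d" by blast
                    have "lt y v" using tr[of y d v] d vD yX vX MX by blast
                    then show ?thesis unfolding comparable_def by blast
                  next
                    case nD: False
                    show ?thesis
                    proof (cases "\<exists>u\<in>M. lt x u \<and> lt u y")
                      case True
                      then obtain u where u: "u \<in> M" "lt x u" "lt u y" by blast
                      have "lt v y" using tr[of v u y] u vU yX vX MX by blast
                      then show ?thesis unfolding comparable_def by blast
                    next
                      case nU: False
                      have "y \<in> C" unfolding C_def using yX yM nD nU all unfolding comparable_def by blast
                      then show ?thesis using y by blast
                    qed
                  qed
                qed
              qed
              then show ?thesis by blast
            next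
              assume none: "\<forall>m\<in>M. \<not> comparable lt y m"
              have "\<forall>v\<in>C. \<not> comparable lt y v"
              proof
                fix v assume v: "v \<in> C"
                hence vX: "v \<in> X" unfolding C_def by blast
                show "\<not> comparable lt y v"
                proof (cases "v \<in> M")
                  case True then show ?thesis using none by blast
                next
                  case vM: False
                  have vD: "lt z v" and vU: "lt v m"
                    using v vM assms(4) zx mM xm unfolding C_def by auto
                  show ?thesis
                  proof
                    assume "comparable lt y v"
                    then show False unfolding comparable_def
                    proof
                      assume "lt y v"
                      then have "lt y m" using tr[OF yX vX mX] vU by blast
                      then show False using none mM unfolding comparable_def by blast
                    next
                      assume "lt v y"
                      then have "lt z y" using tr[OF zX vX yX] vD by blast
                      then show False using none assms(4) unfolding comparable_def by blast
                    qed
                  qed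
                qed
              qed
              then show ?thesis by blast
            qed
          qed
        qed
        from strong[OF this] show False using xC zC mC assms(4) mM xM by blast
      qed
      ultimately have "lt m x" by blast
      then show "W m \<subseteq> W x" using rep mX xX by blast
    qed
  qed
qed

end
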